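(* Let $\kappa$ be an infinite cardinal and let $\mathscr{U}$ be a uniform ultrafilter over $\kappa$ with ${\rm Ch}(\mathscr{U})=\mu$. Then $\operatorname{cf}(\mu)>\omega$. Consequently $\operatorname{cf}(\mathfrak{u}_\kappa)>\omega$ for every infinite cardinal $\kappa$.
   Context: An ultrafilter $\mathscr{U}$ over $\kappa$ is uniform if every element of $\mathscr{U}$ has cardinality $\kappa$. A base for $\mathscr{U}$ is a collection $\mathcal{B}\subseteq\mathscr{U}$ such that every $A\in\mathscr{U}$ contains some $B\in\mathcal{B}$; ${\rm Ch}(\mathscr{U})$ is the minimal cardinality of a base for $\mathscr{U}$. The ultrafilter number $\mathfrak{u}_\kappa$ is the minimum of ${\rm Ch}(\mathscr{U})$ over all uniform ultrafilters $\mathscr{U}$ over $\kappa$. *)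

theory Defs
  imports Main
begin

text \<open>An ultrafilter over the set K (K plays the role of the cardinal kappa).\<close>
definition ultrafilter_on :: "'a set \<Rightarrow> 'a set set \<Rightarrow> bool" where
  "ultrafilter_on K U \<longleftrightarrow>
     U \<subseteq> Pow K \<and> K \<in> U \<and> {} \<notin> U \<and>
     (\<forall>A B. A \<in> U \<and> B \<in> U \<longrightarrow> A \<inter> B \<in> U) \<and>
     (\<forall>A B. A \<in> U \<and> A \<subseteq> B \<and> B \<subseteq> K \<longrightarrow> B \<in> U) \<and>
     (\<forall>A. A \<subseteq> K \<longrightarrow> A \<in> U \<or> K - A \<in> U)"

definition uniform_ultrafilter :: "'a set \<Rightarrow> 'a set set \<Rightarrow> bool" where
  "uniform_ultrafilter K U \<longleftrightarrow>
     ultrafilter_on K U \<and> (\<forall>A\<in>U. (card_of A, card_of K) \<in> ordIso)"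

definition is_base :: "'a set set \<Rightarrow> 'a set set \<Rightarrow> bool" where
  "is_base U B \<longleftrightarrow> B \<subseteq> U \<and> (\<forall>A\<in>U. \<exists>C\<in>B. C \<subseteq> A)"

definition Ch_is :: "'a set set \<Rightarrow> 'b rel \<Rightarrow> bool" where
  "Ch_is U \<mu> \<longleftrightarrow>
     (\<exists>B. is_base U B \<and> (card_of B, \<mu>) \<in> ordIso) \<and>
     (\<forall>B. is_base U B \<longrightarrow> (\<mu>, card_of B) \<in> ordLeq)"

definition u_number_is :: "'a set \<Rightarrow> 'b rel \<Rightarrow> bool" where
  "u_number_is K \<nu> \<longleftrightarrow>
     (\<exists>U. uniform_ultrafilter K U \<and> Ch_is U \<nu>) \<and>
     (\<forall>U B. uniform_ultrafilter K U \<and> is_base U B \<longrightarrow> (\<nu>, card_of B) \<in> ordLeq)"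

definition cf_gt_omega :: "'b rel \<Rightarrow> bool" where
  "cf_gt_omega r \<longleftrightarrow>
     (\<forall>C. C \<subseteq> Field r \<and> (\<forall>a\<in>Field r. \<exists>c\<in>C. (a, c) \<in> r)
          \<longrightarrow> (natLeq, card_of C) \<in> ordLess)"

end

theory Submission
  imports Defs
begin

unbundle cardinal_syntax

lemma uf_D:
  assumes "ultrafilter_on K U"
  shows "U \<subseteq> Pow K" "K \<in> U" "{} \<notin> U" "\<And>A B. A \<in> U \<Longrightarrow> B \<in> U \<Longrightarrow> A \<inter> B \<in> U"
    "\<And>A B. A \<in> U \<Longrightarrow> A \<subseteq> B \<Longrightarrow> B \<subseteq> K \<Longrightarrow> B \<in> U"
    "\<And>A. A \<subseteq> K \<Longrightarrow> A \<in> U \<or> K - A \<in> U"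
  using assms unfolding ultrafilter_on_def by (elim conjE; blast)+

lemma uf_inter_fin:
  assumes uf: "ultrafilter_on K U" and fin: "finite F" and ne: "F \<noteq> {}" and sub: "F \<subseteq> U"
  shows "\<Inter>F \<in> U"
  using fin ne sub
proof (induction F rule: finite_ne_induct)
  case (singleton x) then show ?case by simp
next
  case (insert x F)
  then show ?case using uf_D(4)[OF uf] by auto
qed

lemma uf_compl:
  assumes uf: "ultrafilter_on K U" and "E \<subseteq> K" and "E \<notin> U"
  shows "K - E \<in> U"
  using uf_D(6)[OF uf, of E] assms(2,3) by blast

lemma uf_union_notin:
  assumes uf: "ultrafilter_on K U" and "X \<subseteq> K" "Y \<subseteq> K" "X \<notin> U" "Y \<notin> U"
  shows "X \<union> Y \<notin> U"
proof
  assume XY: "X \<union> Y \<in> U"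
  have "K - X \<in> U" using uf_compl[OF uf] assms by blast
  then have "(X \<union> Y) \<inter> (K - X) \<in> U" using XY uf_D(4)[OF uf] by blast
  moreover have "(X \<union> Y) \<inter> (K - X) \<subseteq> Y" by blast
  ultimately have "Y \<in> U" using uf_D(5)[OF uf] assms(3) by blast
  then show False using assms by blast
qed

lemma base_infinite:
  assumes inf: "infinite K" and uu: "uniform_ultrafilter K U" and b: "is_base U B"
  shows "infinite B"
proof
  assume fB: "finite B"
  have uf: "ultrafilter_on K U" using uu unfolding uniform_ultrafilter_def by (rule conjunct1)
  have KU: "K \<in> U" and UP: "U \<subseteq> Pow K" and eU: "{} \<notin> U" using uf_D[OF uf] by blast+
  have BU: "B \<subseteq> U" using b unfolding is_base_def by blast
  have "B \<noteq> {}" using b KU unfolding is_base_def by blast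
  then have IU: "\<Inter>B \<in> U" using uf_inter_fin[OF uf fB _ BU] by blast
  then obtain x where x: "x \<in> \<Inter>B" using eU by (metis ex_in_conv)
  have xK: "x \<in> K" using IU x UP by blast
  have "{x} \<notin> U"
  proof
    assume "{x} \<in> U"
    then have "|{x}| =o |K|" using uu unfolding uniform_ultrafilter_def by blast
    then obtain h where "bij_betw h {x} K" using card_of_ordIso by blast
    then have "finite K" using bij_betw_finite by blast
    then show False using inf by blast
  qed
  then have "K - {x} \<in> U" using uf_compl[OF uf] xK by blast
  then obtain C where "C \<in> B" "C \<subseteq> K - {x}" using b unfolding is_base_def by blast
  then show False using x by blast
qed

lemma nb_ex: "\<not> (\<forall>A\<in>U. \<exists>X\<in>Bs. X \<subseteq> A) \<Longrightarrow> \<exists>A\<in>U. \<forall>X\<in>Bs. \<not> X \<subseteq> A"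
  by blast

lemma main:
  assumes inf: "infinite K" and uu: "uniform_ultrafilter K U" and co: "Card_order \<mu>"
    and ch: "Ch_is U \<mu>"
    and CF: "C \<subseteq> Field \<mu>" "\<forall>a\<in>Field \<mu>. \<exists>c\<in>C. (a,c)\<in>\<mu>"
  shows "natLeq <o |C|"
proof (rule ccontr)
  have uf: "ultrafilter_on K U" using uu unfolding uniform_ultrafilter_def by (rule conjunct1)
  have KU: "K \<in> U" and UP: "U \<subseteq> Pow K" and eU: "{} \<notin> U"
    and IN: "\<And>A B. A \<in> U \<Longrightarrow> B \<in> U \<Longrightarrow> A \<inter> B \<in> U"
    and UPW: "\<And>A B. A \<in> U \<Longrightarrow> A \<subseteq> B \<Longrightarrow> B \<subseteq> K \<Longrightarrow> B \<in> U"
    and UL: "\<And>A. A \<subseteq> K \<Longrightarrow> A \<in> U \<or> K - A \<in> U"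
    using uf_D[OF uf] by blast+
  assume "\<not> natLeq <o |C|"
  hence "|C| \<le>o natLeq" using ordLess_or_ordLeq natLeq_Well_order card_of_Well_order by blast
  hence "|C| \<le>o |UNIV::nat set|" using ordLeq_ordIso_trans[OF _ ordIso_symmetric[OF card_of_nat]] by blast
  then obtain f :: "_ \<Rightarrow> nat" where f: "inj_on f C" using card_of_ordLeq[of C "UNIV::nat set"] by auto
  from ch obtain B0 where b0: "is_base U B0" "|B0| =o \<mu>"
    and minb: "\<And>B. is_base U B \<Longrightarrow> \<mu> \<le>o |B|" unfolding Ch_is_def by blast
  have "|Field \<mu>| =o |B0|"
    using ordIso_transitive[OF card_of_Field_ordIso[OF co] ordIso_symmetric[OF b0(2)]] .
  then obtain g where g: "bij_betw g (Field \<mu>) B0" using card_of_ordIso[of "Field \<mu>" B0] by blast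
  have infB0: "infinite B0" using base_infinite[OF inf uu b0(1)] .
  have infF: "infinite (Field \<mu>)" using g infB0 bij_betw_finite by blast
  have B0U: "B0 \<subseteq> U" using b0(1) unfolding is_base_def by blast
  have finless: "|X| <o \<mu>" if "finite X" for X :: "'b set"
    using finite_ordLess_infinite[OF card_of_Well_order card_order_on_well_order_on[OF co]] that infF
    by (simp add: Field_card_of)
  define W where "W n = {a. \<exists>x\<in>C. f x = n \<and> (a,x) \<in> \<mu>}" for n
  have W: "|W n| <o \<mu>" for n
  proof (cases "\<exists>x\<in>C. f x = n")
    case True
    then obtain x where x: "x \<in> C" "f x = n" by blast
    have "W n \<subseteq> underS \<mu> x \<union> {x}"
      using x f unfolding W_def underS_def by (auto dest: inj_onD)
    moreover have "|underS \<mu> x \<union> {x}| <o \<mu>"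
      using card_of_Un_ordLess_infinite_Field[OF infF co card_of_underS[OF co] finless]
        x CF(1) by blast
    ultimately show ?thesis using card_of_mono1 ordLeq_ordLess_trans by blast
  next
    case False
    then have "W n = {}" unfolding W_def by blast
    then show ?thesis using finless by simp
  qed
  have WF: "W n \<subseteq> Field \<mu>" for n unfolding W_def by (auto intro: FieldI1)
  define S where "S n = g ` (\<Union>k\<le>n. W k)" for n
  have Uless: "|\<Union>k\<le>n. W k| <o \<mu>" for n
  proof (induction n)
    case 0 then show ?case using W by simp
  next
    case (Suc n)
    have "(\<Union>k\<le>Suc n. W k) = (\<Union>k\<le>n. W k) \<union> W (Suc n)" by (auto simp: atMost_Suc)
    then show ?case using card_of_Un_ordLess_infinite_Field[OF infF co Suc W] by simp
  qed
  have Sless: "|S n| <o \<mu>" for n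
    unfolding S_def using card_of_image Uless ordLeq_ordLess_trans by blast
  have Sb: "S n \<subseteq> B0" for n
    unfolding S_def using WF g unfolding bij_betw_def by blast
  have Smono: "m \<le> n \<Longrightarrow> S m \<subseteq> S n" for m n unfolding S_def by (intro image_mono UN_mono) auto
  have Scov: "\<exists>m. B \<in> S m" if BB: "B \<in> B0" for B
  proof -
    obtain a where a: "a \<in> Field \<mu>" "B = g a" using g BB unfolding bij_betw_def by blast
    obtain x where x: "x \<in> C" "(a,x) \<in> \<mu>" using CF(2) a by blast
    have "a \<in> W (f x)" unfolding W_def using x by blast
    then have "B \<in> S (f x)" unfolding S_def using a by blast
    then show ?thesis by blast
  qed
  define P where "P E n D \<longleftrightarrow> D \<subseteq> K - E \<and> D \<notin> U \<and> (\<forall>B\<in>S n. B \<inter> D \<noteq> {})" for E n D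
  have key: "\<exists>D. P E n D" if KE: "K - E \<in> U" for E n
  proof -
    let ?B = "(\<lambda>B. B \<inter> (K - E)) ` S n"
    have nb: "\<not> is_base U ?B"
    proof
      assume "is_base U ?B"
      then have "\<mu> \<le>o |?B|" using minb by blast
      also have "|?B| \<le>o |S n|" by (rule card_of_image)
      finally have "\<mu> \<le>o |S n|" .
      then have "\<mu> <o \<mu>" using ordLeq_ordLess_trans[OF _ Sless] by blast
      then show False using ordLess_irreflexive by blast
    qed
    have "?B \<subseteq> U"
    proof
      fix X assume "X \<in> ?B"
      then obtain B where "B \<in> S n" "X = B \<inter> (K - E)" by blast
      then have "B \<in> U" using Sb B0U by blast
      then show "X \<in> U" using IN[OF _ KE] \<open>X = B \<inter> (K - E)\<close> by simp
    qed
    then have "\<not> (\<forall>A\<in>U. \<exists>X\<in>?B. X \<subseteq> A)"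
      using nb unfolding is_base_def by (intro notI) (erule notE, intro conjI)
    from nb_ex[OF this] obtain A where A: "A \<in> U" "\<forall>X\<in>?B. \<not> X \<subseteq> A" ..
    define D where "D = (K - E) - A"
    have "D \<notin> U"
    proof
      assume "D \<in> U"
      then have "D \<inter> A \<in> U" using IN A by blast
      moreover have "D \<inter> A = {}" unfolding D_def by blast
      ultimately show False using eU by simp
    qed
    moreover have "\<forall>B\<in>S n. B \<inter> D \<noteq> {}"
    proof
      fix B assume "B \<in> S n"
      then have "B \<inter> (K - E) \<in> ?B" by (rule imageI)
      then have "\<not> B \<inter> (K - E) \<subseteq> A" by (rule bspec[OF A(2)])
      then show "B \<inter> D \<noteq> {}" unfolding D_def by blast
    qed
    moreover have "D \<subseteq> K - E" unfolding D_def by blast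
    ultimately have "P E n D" unfolding P_def by blast
    then show ?thesis by blast
  qed
  define T where "T = rec_nat {} (\<lambda>n T. T \<union> (SOME D. P T n D))"
  have T0: "T 0 = {}" unfolding T_def by simp
  have TS: "T (Suc n) = T n \<union> (SOME D. P (T n) n D)" for n unfolding T_def by simp
  define D where "D n = (SOME D. P (T n) n D)" for n
  have inv: "T n \<subseteq> K \<and> T n \<notin> U \<and> P (T n) n (D n)" for n
  proof (induction n)
    case 0
    have "K - T 0 \<in> U" using T0 KU by simp
    then have "P (T 0) 0 (D 0)" unfolding D_def by (rule someI_ex[OF key])
    then show ?case using T0 eU by simp
  next
    case (Suc n)
    have DK: "D n \<subseteq> K" "D n \<notin> U" using Suc unfolding P_def by blast+
    have T1: "T (Suc n) = T n \<union> D n" using TS D_def by simp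
    have "T (Suc n) \<subseteq> K" using T1 DK Suc by blast
    moreover have "T (Suc n) \<notin> U" using T1 uf_union_notin[OF uf] DK Suc by auto
    moreover have "P (T (Suc n)) (Suc n) (D (Suc n))"
    proof -
      have "K - T (Suc n) \<in> U" using uf_compl[OF uf] calculation by blast
      then show ?thesis unfolding D_def by (rule someI_ex[OF key])
    qed
    ultimately show ?case by blast
  qed
  have T1: "T (Suc n) = T n \<union> D n" for n using TS D_def by simp
  have Tmono: "T m \<subseteq> T n" if "m \<le> n" for m n
    using that
  proof (induction n)
    case 0 then show ?case by simp
  next
    case (Suc n) then show ?case using T1 by (auto simp: le_Suc_eq)
  qed
  have disj: "D m \<inter> D n = {}" if "m < n" for m n
  proof -
    have "D m \<subseteq> T (Suc m)" using T1 by blast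
    also have "\<dots> \<subseteq> T n" using Tmono that by simp
    finally have "D m \<subseteq> T n" .
    moreover have "D n \<subseteq> K - T n" using inv unfolding P_def by blast
    ultimately show ?thesis by blast
  qed
  have disj2: "D m \<inter> D n = {}" if "m \<noteq> n" for m n
    using disj[of m n] disj[of n m] that by (cases "m < n") auto
  have DB: "\<forall>B\<in>S n. B \<inter> D n \<noteq> {}" for n using inv unfolding P_def by blast
  have DK: "D n \<subseteq> K" for n using inv unfolding P_def by blast
  define Z where "Z = (\<Union>n\<in>{n. even n}. D n)"
  have "Z \<subseteq> K" unfolding Z_def using DK by blast
  then have "Z \<in> U \<or> K - Z \<in> U" using UL by blast
  then show False
  proof
    assume "Z \<in> U"
    then obtain B where B: "B \<in> B0" "B \<subseteq> Z" using b0(1) unfolding is_base_def by blast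
    obtain m where "B \<in> S m" using Scov B by blast
    then have "B \<in> S (2*m+1)" using Smono[of m "2*m+1"] by auto
    then obtain y where y: "y \<in> B" "y \<in> D (2*m+1)" using DB by blast
    then obtain k where "even k" "y \<in> D k" using B unfolding Z_def by blast
    moreover have "k \<noteq> 2*m+1" using \<open>even k\<close> by auto
    ultimately show False using disj2 y by blast
  next
    assume "K - Z \<in> U"
    then obtain B where B: "B \<in> B0" "B \<subseteq> K - Z" using b0(1) unfolding is_base_def by blast
    obtain m where "B \<in> S m" using Scov B by blast
    then have "B \<in> S (2*m)" using Smono[of m "2*m"] by auto
    then obtain y where y: "y \<in> B" "y \<in> D (2*m)" using DB by blast
    then have "y \<in> Z" unfolding Z_def by (intro UN_I[of "2*m"]) auto
    then show False using y B by blast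
  qed
qed

theorem mainTheorem2:
  fixes K :: "'a set"
  assumes "infinite K"
  shows "(\<forall>U (\<mu> :: 'a set set rel).
            uniform_ultrafilter K U \<and> Card_order \<mu> \<and> Ch_is U \<mu> \<longrightarrow> cf_gt_omega \<mu>)
       \<and> (\<forall>\<nu> :: 'a set set rel.
            Card_order \<nu> \<and> u_number_is K \<nu> \<longrightarrow> cf_gt_omega \<nu>)"
proof -
  have A: "\<forall>U (\<mu> :: 'a set set rel).
            uniform_ultrafilter K U \<and> Card_order \<mu> \<and> Ch_is U \<mu> \<longrightarrow> cf_gt_omega \<mu>"
    unfolding cf_gt_omega_def using main[OF assms] by blast
  moreover have "\<forall>\<nu> :: 'a set set rel.
            Card_order \<nu> \<and> u_number_is K \<nu> \<longrightarrow> cf_gt_omega \<nu>"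
    using A unfolding u_number_is_def by blast
  ultimately show ?thesis by blast
qed

end
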